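(* Let $(u_i)_{i\in\mathbb{N}}$ be real numbers with $\sum_{i=1}^M u_i^2>0$ for every $M\in\mathbb{N}$, and suppose there exist $\beta>1$, $\beta'>0$ and $c>0$ (possibly depending on $\beta,\beta'$) such that $$\frac{\sum_{i=B}^M u_i^2}{\sum_{i=1}^M u_i^2}\le\frac{c}{M^{\beta'}}\quad\text{for all }M\in\mathbb{N},\qquad B=\big\lfloor(M^{1/\beta}-1)^\beta\big\rfloor.$$ Let $(E_{ij})_{i,j\in\mathbb{N}}$ be centered i.i.d. real random variables with variance $\sigma^2$ and finite fourth moment, let $E_M:=M^{-1/2}(E_{ij})_{i,j\le M}$, and let $\tilde u_M:=\big(\sum_{i=1}^M u_i^2\big)^{-1/2}(u_1,\dots,u_M)^T$. Then $$\tilde u_M^T E_ME_M^T\tilde u_M\longrightarrow\sigma^2\quad\text{almost surely as }M\to\infty.$$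
   Context: $\lfloor x\rfloor$ is the largest integer $\le x$. *)

theory Defs
  imports "HOL-Probability.Probability"
begin

end

theory Submission
  imports Defs "HOL-Real_Asymp.Real_Asymp"
begin


lemma (in prob_space) integrable_pow_le4:
  fixes f :: "'a \<Rightarrow> real"
  assumes "f \<in> borel_measurable M" "integrable M (\<lambda>x. f x ^ 4)" "p \<le> 4"
  shows "integrable M (\<lambda>x. f x ^ p)"
proof (rule Bochner_Integration.integrable_bound[of _ "\<lambda>x. 1 + f x ^ 4"])
  show "integrable M (\<lambda>x. 1 + f x ^ 4)" using assms by auto
  show "(\<lambda>x. f x ^ p) \<in> borel_measurable M" using assms by auto
  show "AE x in M. norm (f x ^ p) \<le> norm (1 + f x ^ 4)"
  proof (intro AE_I2)
    fix x
    have "\<bar>f x\<bar> ^ p \<le> 1 + \<bar>f x\<bar> ^ 4"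
    proof (cases "\<bar>f x\<bar> \<le> 1")
      case True
      then have "\<bar>f x\<bar> ^ p \<le> 1" by (simp add: power_le_one)
      then show ?thesis by (smt (verit) zero_le_power abs_ge_zero)
    next
      case False
      then have "\<bar>f x\<bar> ^ p \<le> \<bar>f x\<bar> ^ 4" using assms(3) by (intro power_increasing) auto
      then show ?thesis by simp
    qed
    moreover have "\<bar>f x\<bar>^4 = f x ^ 4" by (simp add: power_even_abs_numeral)
    ultimately show "norm (f x ^ p) \<le> norm (1 + f x ^ 4)"
      by (simp add: power_abs)
  qed
qed

lemma (in prob_space) indep_fun_disj:
  fixes X :: "'k \<Rightarrow> 'a \<Rightarrow> real"
  assumes ind: "indep_vars (\<lambda>_. borel) X K" and AB: "A \<inter> B = {}" "A \<subseteq> K" "B \<subseteq> K"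
    and F: "F \<in> borel_measurable (PiM A (\<lambda>_. borel))"
    and G: "G \<in> borel_measurable (PiM B (\<lambda>_. borel))"
  shows "indep_var borel (\<lambda>\<omega>. F (restrict (\<lambda>i. X i \<omega>) A)) borel (\<lambda>\<omega>. G (restrict (\<lambda>i. X i \<omega>) B))"
  using indep_var_compose[OF indep_var_restrict[OF ind AB] F G] by (simp add: comp_def)

lemma (in prob_space) indep_fun_disj_integral:
  fixes X :: "'k \<Rightarrow> 'a \<Rightarrow> real" and f g :: "'a \<Rightarrow> real"
  assumes ind: "indep_vars (\<lambda>_. borel) X K" and AB: "A \<inter> B = {}" "A \<subseteq> K" "B \<subseteq> K"
    and F: "F \<in> borel_measurable (PiM A (\<lambda>_. borel))"
    and G: "G \<in> borel_measurable (PiM B (\<lambda>_. borel))"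
    and f: "\<And>\<omega>. f \<omega> = F (restrict (\<lambda>i. X i \<omega>) A)"
    and g: "\<And>\<omega>. g \<omega> = G (restrict (\<lambda>i. X i \<omega>) B)"
    and "integrable M f" "integrable M g"
  shows "expectation (\<lambda>\<omega>. f \<omega> * g \<omega>) = expectation f * expectation g"
    "integrable M (\<lambda>\<omega>. f \<omega> * g \<omega>)"
proof -
  have fe: "f = (\<lambda>\<omega>. F (restrict (\<lambda>i. X i \<omega>) A))" "g = (\<lambda>\<omega>. G (restrict (\<lambda>i. X i \<omega>) B))"
    using f g by auto
  have I: "indep_var borel f borel g" unfolding fe by (rule indep_fun_disj[OF ind AB F G])
  show "expectation (\<lambda>\<omega>. f \<omega> * g \<omega>) = expectation f * expectation g"
    "integrable M (\<lambda>\<omega>. f \<omega> * g \<omega>)"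
    using indep_var_lebesgue_integral[OF I] indep_var_integrable[OF I] assms(9,10) by (simp_all add: fe[symmetric])
qed

lemma meas_lin':
  assumes "F \<subseteq> A"
  shows "(\<lambda>f. (\<Sum>k\<in>F. w k * f k) ^ p) \<in> borel_measurable (PiM A (\<lambda>_. borel::real measure))"
proof -
  have "(\<lambda>f. (\<Sum>k\<in>F. w k * f k)) \<in> borel_measurable (PiM A (\<lambda>_. borel::real measure))"
    using assms by (intro borel_measurable_sum borel_measurable_times borel_measurable_const measurable_component_singleton) auto
  then show ?thesis by measurable
qed

lemma meas_lin:
  assumes "finite A"
  shows "(\<lambda>f. (\<Sum>k\<in>A. w k * f k) ^ p) \<in> borel_measurable (PiM A (\<lambda>_. borel::real measure))"
  using assms meas_lin'[of A A] by auto

locale iid4 = prob_space +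
  fixes X :: "'k \<Rightarrow> 'a \<Rightarrow> real" and K :: "'k set" and s m4 :: real
  assumes ind: "indep_vars (\<lambda>_. borel) X K"
  and int4: "\<And>k. k\<in>K \<Longrightarrow> integrable M (\<lambda>\<omega>. X k \<omega> ^ 4)"
  and mean0: "\<And>k. k\<in>K \<Longrightarrow> expectation (X k) = 0"
  and var: "\<And>k. k \<in> K \<Longrightarrow> expectation (\<lambda>\<omega>. X k \<omega> ^ 2) = s"
  and m4: "\<And>k. k\<in>K \<Longrightarrow> expectation (\<lambda>\<omega>. X k \<omega> ^ 4) \<le> m4"
begin

definition "C4 = max m4 (3 * s^2)"

lemma rv: "k \<in> K \<Longrightarrow> X k \<in> borel_measurable M"
  using ind unfolding indep_vars_def by auto

lemma intX: "k \<in> K \<Longrightarrow> p \<le> 4 \<Longrightarrow> integrable M (\<lambda>\<omega>. X k \<omega> ^ p)"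
  using integrable_pow_le4[OF rv int4] by auto

lemma s_nonneg: "k \<in> K \<Longrightarrow> 0 \<le> s"
  using var[of k] by (metis integral_nonneg_AE AE_I2 zero_le_power2)

lemma restr_sum: "(\<Sum>k\<in>A. w k * restrict f A k) = (\<Sum>k\<in>A. w k * f k)"
  by (rule sum.cong) auto

lemma lin:
  assumes "finite F" "F \<subseteq> K"
  shows "integrable M (\<lambda>\<omega>. (\<Sum>k\<in>F. w k * X k \<omega>) ^ 4) \<and>
    expectation (\<lambda>\<omega>. \<Sum>k\<in>F. w k * X k \<omega>) = 0 \<and>
    expectation (\<lambda>\<omega>. (\<Sum>k\<in>F. w k * X k \<omega>) ^ 2) = s * (\<Sum>k\<in>F. (w k)^2) \<and>
    expectation (\<lambda>\<omega>. (\<Sum>k\<in>F. w k * X k \<omega>) ^ 4) \<le> C4 * (\<Sum>k\<in>F. (w k)^2)^2"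
  using assms
proof (induction F rule: finite_induct)
  case empty
  then show ?case by (simp add: C4_def)
next
  case (insert k F)
  define Y where "Y = (\<lambda>\<omega>. \<Sum>k\<in>F. w k * X k \<omega>)"
  define a where "a = w k"
  define x where "x = X k"
  have kK: "k \<in> K" and FK: "F \<subseteq> K" using insert by auto
  from insert.IH[OF FK] have IH: "integrable M (\<lambda>\<omega>. Y \<omega> ^ 4)" "expectation Y = 0"
    "expectation (\<lambda>\<omega>. Y \<omega> ^ 2) = s * (\<Sum>k\<in>F. (w k)^2)"
    "expectation (\<lambda>\<omega>. Y \<omega> ^ 4) \<le> C4 * (\<Sum>k\<in>F. (w k)^2)^2"
    unfolding Y_def by auto
  have Ym: "Y \<in> borel_measurable M" unfolding Y_def using FK
    by (intro borel_measurable_sum borel_measurable_times borel_measurable_const rv) auto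
  have xm: "x \<in> borel_measurable M" unfolding x_def using kK by (rule rv)
  have intY: "p \<le> 4 \<Longrightarrow> integrable M (\<lambda>\<omega>. Y \<omega> ^ p)" for p
    using integrable_pow_le4[OF Ym IH(1)] by auto
  have intx: "p \<le> 4 \<Longrightarrow> integrable M (\<lambda>\<omega>. x \<omega> ^ p)" for p
    unfolding x_def using intX[OF kK] by auto
  have prodE: "expectation (\<lambda>\<omega>. Y \<omega> ^ p * x \<omega> ^ q) = expectation (\<lambda>\<omega>. Y \<omega> ^ p) * expectation (\<lambda>\<omega>. x \<omega> ^ q)
     \<and> integrable M (\<lambda>\<omega>. Y \<omega> ^ p * x \<omega> ^ q)" if "p \<le> 4" "q \<le> 4" for p q
  proof -
    have m1: "(\<lambda>f. (\<Sum>k\<in>F. w k * f k) ^ p) \<in> borel_measurable (PiM F (\<lambda>_. borel::real measure))"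
      using insert(1) by (rule meas_lin)
    have m2: "(\<lambda>f. f k ^ q) \<in> borel_measurable (PiM {k} (\<lambda>_. borel::real measure))"
      by (intro borel_measurable_power measurable_component_singleton) auto
    show ?thesis
      using indep_fun_disj_integral[OF ind _ FK _ m1 m2, of "\<lambda>\<omega>. Y \<omega> ^ p" "\<lambda>\<omega>. x \<omega> ^ q"]
        insert(2) kK intY[OF that(1)] intx[OF that(2)]
      by (auto simp: Y_def x_def restr_sum)
  qed
  have Ex: "expectation x = 0" "expectation (\<lambda>\<omega>. x \<omega> ^ 2) = s" "expectation (\<lambda>\<omega>. x \<omega> ^ 4) \<le> m4"
    unfolding x_def using mean0 var m4 kK by auto
  have sum_ins: "\<And>\<omega>. (\<Sum>k\<in>insert k F. w k * X k \<omega>) = Y \<omega> + a * x \<omega>"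
    unfolding Y_def a_def x_def using insert(1,2) by auto
  have p1: "integrable M (\<lambda>\<omega>. Y \<omega> ^ 1 * x \<omega> ^ 1)" "integrable M (\<lambda>\<omega>. Y \<omega> ^ 3 * x \<omega> ^ 1)"
     "integrable M (\<lambda>\<omega>. Y \<omega> ^ 2 * x \<omega> ^ 2)" "integrable M (\<lambda>\<omega>. Y \<omega> ^ 1 * x \<omega> ^ 3)"
    using prodE[of 1 1] prodE[of 3 1] prodE[of 2 2] prodE[of 1 3] by simp_all
  have e1: "expectation (\<lambda>\<omega>. Y \<omega> ^ 1 * x \<omega> ^ 1) = 0" "expectation (\<lambda>\<omega>. Y \<omega> ^ 3 * x \<omega> ^ 1) = 0"
     "expectation (\<lambda>\<omega>. Y \<omega> ^ 2 * x \<omega> ^ 2) = s * (\<Sum>k\<in>F. (w k)^2) * s"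
     "expectation (\<lambda>\<omega>. Y \<omega> ^ 1 * x \<omega> ^ 3) = 0"
    using prodE[of 1 1] prodE[of 3 1] prodE[of 2 2] prodE[of 1 3] IH Ex by auto
  have i4: "integrable M (\<lambda>\<omega>. (Y \<omega> + a * x \<omega>) ^ 4)"
  proof -
    have eq: "(\<lambda>\<omega>. (Y \<omega> + a * x \<omega>) ^ 4) = (\<lambda>\<omega>. Y \<omega>^4 + 4*a*(Y \<omega> ^ 3 * x \<omega> ^ 1) + 6*a^2*(Y \<omega> ^ 2 * x \<omega> ^ 2)
        + 4*a^3*(Y \<omega> ^ 1 * x \<omega> ^ 3) + a^4 * x \<omega> ^ 4)"
      by (auto simp: algebra_simps power2_eq_square power4_eq_xxxx eval_nat_numeral)
    show ?thesis unfolding eq using p1 intY[of 4] intx[of 4] by auto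
  qed
  have E4: "expectation (\<lambda>\<omega>. (Y \<omega> + a * x \<omega>) ^ 4) = expectation (\<lambda>\<omega>. Y \<omega>^4) + 6*a^2*(s * (\<Sum>k\<in>F. (w k)^2) * s)
        + a^4 * expectation (\<lambda>\<omega>. x \<omega> ^ 4)"
  proof -
    have eq: "(\<lambda>\<omega>. (Y \<omega> + a * x \<omega>) ^ 4) = (\<lambda>\<omega>. Y \<omega>^4 + 4*a*(Y \<omega> ^ 3 * x \<omega> ^ 1) + 6*a^2*(Y \<omega> ^ 2 * x \<omega> ^ 2)
        + 4*a^3*(Y \<omega> ^ 1 * x \<omega> ^ 3) + a^4 * x \<omega> ^ 4)"
      by (auto simp: algebra_simps power2_eq_square power4_eq_xxxx eval_nat_numeral)
    show ?thesis unfolding eq using p1 intY[of 4] intx[of 4] e1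
      by (simp add: Bochner_Integration.integral_add)
  qed
  have E2: "expectation (\<lambda>\<omega>. (Y \<omega> + a * x \<omega>) ^ 2) = s * (\<Sum>k\<in>F. (w k)^2) + a^2 * s"
  proof -
    have eq: "(\<lambda>\<omega>. (Y \<omega> + a * x \<omega>) ^ 2) = (\<lambda>\<omega>. Y \<omega>^2 + 2*a*(Y \<omega> ^ 1 * x \<omega> ^ 1) + a^2 * x \<omega> ^ 2)"
      by (auto simp: algebra_simps power2_eq_square)
    show ?thesis unfolding eq using p1 intY[of 2] intx[of 2] e1 IH Ex
      by (simp add: Bochner_Integration.integral_add)
  qed
  have E1: "expectation (\<lambda>\<omega>. Y \<omega> + a * x \<omega>) = 0"
    using intY[of 1] intx[of 1] IH Ex by (simp add: Bochner_Integration.integral_add)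
  have s0: "0 \<le> s" by (rule s_nonneg[OF kK])
  define S where "S = (\<Sum>k\<in>F. (w k)^2)"
  have S0: "0 \<le> S" unfolding S_def by (auto intro: sum_nonneg)
  have Sins: "(\<Sum>k\<in>insert k F. (w k)^2) = S + a^2" unfolding S_def a_def using insert(1,2) by simp
  have "expectation (\<lambda>\<omega>. Y \<omega>^4) + 6*a^2*(s * S * s) + a^4 * expectation (\<lambda>\<omega>. x \<omega> ^ 4)
      \<le> C4 * S^2 + 2 * C4 * S * a^2 + C4 * a^4"
  proof -
    have "6*a^2*(s * S * s) \<le> 2 * C4 * S * a^2"
    proof -
      have "6 * s^2 \<le> 2 * C4" unfolding C4_def by auto
      then have "(6 * s^2) * (a^2 * S) \<le> (2 * C4) * (a^2 * S)" using S0 by (intro mult_right_mono) auto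
      then show ?thesis by (simp add: power2_eq_square algebra_simps)
    qed
    moreover have "a^4 * expectation (\<lambda>\<omega>. x \<omega> ^ 4) \<le> C4 * a^4"
    proof -
      have "expectation (\<lambda>\<omega>. x \<omega> ^ 4) \<le> C4" using Ex(3) unfolding C4_def by auto
      moreover have "0 \<le> a^4" by simp
      ultimately show ?thesis by (metis mult.commute mult_left_mono)
    qed
    ultimately show ?thesis using IH(4) unfolding S_def by linarith
  qed
  also have "\<dots> = C4 * (S + a^2)^2" by (simp add: power2_eq_square power4_eq_xxxx algebra_simps)
  finally show ?case unfolding Sins using i4 E4 E2 E1 unfolding S_def by (simp only: sum_ins) (simp add: algebra_simps)
qed

lemma cols:
  assumes "finite J" "\<And>j. j\<in>J \<Longrightarrow> finite (Cs j) \<and> Cs j \<subseteq> K" "disjoint_family_on Cs J"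
  shows "integrable M (\<lambda>\<omega>. (\<Sum>j\<in>J. (\<Sum>k\<in>Cs j. w k * X k \<omega>)^2 - s * (\<Sum>k\<in>Cs j. (w k)^2)) ^ 2) \<and>
     expectation (\<lambda>\<omega>. \<Sum>j\<in>J. (\<Sum>k\<in>Cs j. w k * X k \<omega>)^2 - s * (\<Sum>k\<in>Cs j. (w k)^2)) = 0 \<and>
     expectation (\<lambda>\<omega>. (\<Sum>j\<in>J. (\<Sum>k\<in>Cs j. w k * X k \<omega>)^2 - s * (\<Sum>k\<in>Cs j. (w k)^2)) ^ 2)
       \<le> C4 * (\<Sum>j\<in>J. (\<Sum>k\<in>Cs j. (w k)^2)^2)"
  using assms
proof (induction J rule: finite_induct)
  case empty
  then show ?case by simp
next
  case (insert j J)
  define R where "R = (\<lambda>\<omega>. \<Sum>j\<in>J. (\<Sum>k\<in>Cs j. w k * X k \<omega>)^2 - s * (\<Sum>k\<in>Cs j. (w k)^2))"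
  define S where "S = (\<Sum>k\<in>Cs j. (w k)^2)"
  define Y where "Y = (\<lambda>\<omega>. \<Sum>k\<in>Cs j. w k * X k \<omega>)"
  define Z where "Z = (\<lambda>\<omega>. (Y \<omega>)^2 - s * S)"
  have dJ: "disjoint_family_on Cs J" using insert(5) by (auto simp: disjoint_family_on_def)
  from insert.IH[OF _ dJ] insert(4) have IH: "integrable M (\<lambda>\<omega>. R \<omega> ^ 2)" "expectation R = 0"
    "expectation (\<lambda>\<omega>. R \<omega> ^ 2) \<le> C4 * (\<Sum>j\<in>J. (\<Sum>k\<in>Cs j. (w k)^2)^2)"
    unfolding R_def by auto
  have Cj: "finite (Cs j)" "Cs j \<subseteq> K" using insert(4) by auto
  have AK: "(\<Union>i\<in>J. Cs i) \<subseteq> K" using insert(4) by auto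
  have disj: "(\<Union>i\<in>J. Cs i) \<inter> Cs j = {}"
    using insert(2,5) unfolding disjoint_family_on_def by fastforce
  have L: "integrable M (\<lambda>\<omega>. Y \<omega> ^ 4)" "expectation (\<lambda>\<omega>. Y \<omega> ^ 2) = s * S"
     "expectation (\<lambda>\<omega>. Y \<omega> ^ 4) \<le> C4 * S^2"
    using lin[OF Cj, of w] unfolding Y_def S_def by auto
  have Ym: "Y \<in> borel_measurable M" unfolding Y_def using Cj
    by (intro borel_measurable_sum borel_measurable_times borel_measurable_const rv) auto
  have Rm: "R \<in> borel_measurable M" unfolding R_def using insert(4)
    by (intro borel_measurable_sum borel_measurable_diff borel_measurable_power borel_measurable_times borel_measurable_const rv) auto
  have iY2: "integrable M (\<lambda>\<omega>. Y \<omega> ^ 2)" using integrable_pow_le4[OF Ym L(1)] by auto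
  have iZ2: "integrable M (\<lambda>\<omega>. Z \<omega> ^ 2)"
  proof -
    have "(\<lambda>\<omega>. Z \<omega> ^ 2) = (\<lambda>\<omega>. Y \<omega> ^ 4 - 2 * (s * S) * Y \<omega> ^ 2 + (s*S)^2)"
      unfolding Z_def by (auto simp: power2_eq_square power4_eq_xxxx algebra_simps)
    then show ?thesis using L(1) iY2 by auto
  qed
  have EZ2: "expectation (\<lambda>\<omega>. Z \<omega> ^ 2) \<le> C4 * S^2"
  proof -
    have "(\<lambda>\<omega>. Z \<omega> ^ 2) = (\<lambda>\<omega>. Y \<omega> ^ 4 - 2 * (s * S) * Y \<omega> ^ 2 + (s*S)^2)"
      unfolding Z_def by (auto simp: power2_eq_square power4_eq_xxxx algebra_simps)
    then have "expectation (\<lambda>\<omega>. Z \<omega> ^ 2) = expectation (\<lambda>\<omega>. Y \<omega> ^ 4) - 2 * (s*S) * (s * S) + (s*S)^2"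
      using L iY2 by (simp add: prob_space)
    also have "\<dots> \<le> expectation (\<lambda>\<omega>. Y \<omega> ^ 4)" proof -
      have "0 \<le> (s*S)*(s*S)" by simp
      then show ?thesis by (simp add: power2_eq_square algebra_simps)
    qed
    finally show ?thesis using L(3) by linarith
  qed
  have iZ: "integrable M Z" unfolding Z_def using iY2 by auto
  have EZ: "expectation Z = 0" unfolding Z_def using iY2 L(2) by (simp add: prob_space)
  have iR: "integrable M R" using square_integrable_imp_integrable[OF Rm IH(1)] .
  have indep: "expectation (\<lambda>\<omega>. R \<omega> * Z \<omega>) = expectation R * expectation Z \<and> integrable M (\<lambda>\<omega>. R \<omega> * Z \<omega>)"
  proof -
    define FF where "FF = (\<lambda>f. \<Sum>j\<in>J. (\<Sum>k\<in>Cs j. w k * f k)^2 - s * (\<Sum>k\<in>Cs j. (w k)^2))"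
    define GG where "GG = (\<lambda>f. (\<Sum>k\<in>Cs j. w k * f k)^2 - s * S)"
    have m1: "FF \<in> borel_measurable (PiM (\<Union>i\<in>J. Cs i) (\<lambda>_. borel::real measure))"
      unfolding FF_def
      by (intro borel_measurable_sum borel_measurable_diff borel_measurable_const meas_lin') auto
    have m2: "GG \<in> borel_measurable (PiM (Cs j) (\<lambda>_. borel::real measure))"
      unfolding GG_def
      by (intro borel_measurable_sum borel_measurable_diff borel_measurable_const meas_lin') auto
    have f: "R \<omega> = FF (restrict (\<lambda>i. X i \<omega>) (\<Union>i\<in>J. Cs i))" for \<omega>
      unfolding R_def FF_def by (intro sum.cong refl arg_cong2[where f="(-)"] arg_cong[where f="\<lambda>x. x^2"]) auto
    have g: "Z \<omega> = GG (restrict (\<lambda>i. X i \<omega>) (Cs j))" for \<omega>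
      unfolding Z_def GG_def Y_def by (simp add: restr_sum)
    show ?thesis using indep_fun_disj_integral[OF ind disj AK Cj(2) m1 m2 f g iR iZ] by auto
  qed
  have sum_ins: "\<And>\<omega>. (\<Sum>j\<in>insert j J. (\<Sum>k\<in>Cs j. w k * X k \<omega>)^2 - s * (\<Sum>k\<in>Cs j. (w k)^2)) = R \<omega> + Z \<omega>"
    unfolding R_def Z_def Y_def S_def using insert(1,2) by simp
  have sq: "(\<lambda>\<omega>. (R \<omega> + Z \<omega>)^2) = (\<lambda>\<omega>. R \<omega>^2 + 2 * (R \<omega> * Z \<omega>) + Z \<omega>^2)"
    by (auto simp: power2_eq_square algebra_simps)
  have i2: "integrable M (\<lambda>\<omega>. (R \<omega> + Z \<omega>)^2)" unfolding sq using IH(1) iZ2 indep by auto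
  have E2: "expectation (\<lambda>\<omega>. (R \<omega> + Z \<omega>)^2) = expectation (\<lambda>\<omega>. R \<omega>^2) + expectation (\<lambda>\<omega>. Z \<omega>^2)"
    unfolding sq using IH iZ2 indep EZ by (simp add: Bochner_Integration.integral_add)
  have E1: "expectation (\<lambda>\<omega>. R \<omega> + Z \<omega>) = 0" using iR iZ IH(2) EZ by simp
  have Sins: "(\<Sum>j\<in>insert j J. (\<Sum>k\<in>Cs j. (w k)^2)^2) = S^2 + (\<Sum>j\<in>J. (\<Sum>k\<in>Cs j. (w k)^2)^2)"
    unfolding S_def using insert(1,2) by simp
  show ?case unfolding Sins using i2 E1 E2 IH(3) EZ2 by (simp only: sum_ins) (simp add: algebra_simps)
qed

lemma cheb:
  assumes "finite J" "\<And>j. j\<in>J \<Longrightarrow> finite (Cs j) \<and> Cs j \<subseteq> K" "disjoint_family_on Cs J" "e > 0"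
  shows "prob {\<omega> \<in> space M. e \<le> \<bar>(\<Sum>j\<in>J. (\<Sum>k\<in>Cs j. w k * X k \<omega>)^2) - s * (\<Sum>j\<in>J. \<Sum>k\<in>Cs j. (w k)^2)\<bar>}
     \<le> C4 * (\<Sum>j\<in>J. (\<Sum>k\<in>Cs j. (w k)^2)^2) / e^2"
proof -
  define R where "R = (\<lambda>\<omega>. \<Sum>j\<in>J. (\<Sum>k\<in>Cs j. w k * X k \<omega>)^2 - s * (\<Sum>k\<in>Cs j. (w k)^2))"
  have C: "integrable M (\<lambda>\<omega>. R \<omega> ^ 2)" "expectation R = 0" "expectation (\<lambda>\<omega>. R \<omega> ^ 2) \<le> C4 * (\<Sum>j\<in>J. (\<Sum>k\<in>Cs j. (w k)^2)^2)"
    using cols[OF assms(1-3), of w] unfolding R_def by auto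
  have Rm: "R \<in> borel_measurable M" unfolding R_def using assms(2)
    by (intro borel_measurable_sum borel_measurable_diff borel_measurable_power borel_measurable_times borel_measurable_const rv) auto
  have eq: "R \<omega> = (\<Sum>j\<in>J. (\<Sum>k\<in>Cs j. w k * X k \<omega>)^2) - s * (\<Sum>j\<in>J. \<Sum>k\<in>Cs j. (w k)^2)" for \<omega>
    unfolding R_def by (simp add: sum_subtractf sum_distrib_left)
  have "prob {\<omega> \<in> space M. e \<le> \<bar>R \<omega> - expectation R\<bar>} \<le> variance R / e^2"
    by (rule Chebyshev_inequality[OF Rm C(1) assms(4)])
  also have "variance R = expectation (\<lambda>\<omega>. R \<omega> ^ 2)" using C(2) by simp
  finally have "prob {\<omega> \<in> space M. e \<le> \<bar>R \<omega>\<bar>} \<le> expectation (\<lambda>\<omega>. R \<omega> ^ 2) / e^2" using C(2) by simp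
  also have "\<dots> \<le> C4 * (\<Sum>j\<in>J. (\<Sum>k\<in>Cs j. (w k)^2)^2) / e^2"
    using C(3) assms(4) by (intro divide_right_mono) auto
  finally show ?thesis unfolding eq .
qed

end




lemma powr_mvt:
  fixes x r :: real assumes "1 \<le> x"
  shows "\<exists>z. x < z \<and> z < x + 1 \<and> (x+1) powr r - x powr r = r * z powr (r - 1)"
proof -
  have "\<exists>z. x < z \<and> z < x + 1 \<and> (x+1) powr r - x powr r = ((x+1) - x) * (r * z powr (r - 1))"
    by (rule MVT2) (use assms in \<open>auto intro!: has_real_derivative_powr\<close>)
  then show ?thesis by simp
qed

lemma powr_step_ge: fixes x r :: real assumes "1 \<le> x" "1 \<le> r"
  shows "(x+1) powr r - x powr r \<ge> 1"
proof -
  obtain z where z: "x < z" "(x+1) powr r - x powr r = r * z powr (r - 1)" using powr_mvt[OF assms(1)] by auto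
  have "z powr (r-1) \<ge> 1" using z assms by (intro ge_one_powr_ge_zero) auto
  then have "r * z powr (r-1) \<ge> 1 * 1" using assms by (intro mult_mono) auto
  then show ?thesis using z by simp
qed

lemma powr_step_le: fixes x r :: real assumes "1 \<le> x" "1 \<le> r"
  shows "(x+1) powr r - x powr r \<le> r * (x+1) powr (r-1)"
proof -
  obtain z where z: "x < z" "z < x+1" "(x+1) powr r - x powr r = r * z powr (r - 1)" using powr_mvt[OF assms(1)] by auto
  have "z powr (r-1) \<le> (x+1) powr (r-1)" using z assms by (intro powr_mono2) auto
  then show ?thesis using z assms by (simp add: mult_left_mono)
qed

lemma powr_step_sub: fixes x r :: real assumes "1 \<le> x" "0 < r" "r \<le> 1"
  shows "(x+1) powr r \<le> x powr r + 1"
proof -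
  obtain z where z: "x < z" "(x+1) powr r - x powr r = r * z powr (r - 1)" using powr_mvt[OF assms(1)] by auto
  have "z powr (r-1) \<le> z powr 0" using z assms by (intro powr_mono) auto
  then have "z powr (r-1) \<le> 1" using z assms by simp
  then have "r * z powr (r-1) \<le> 1 * 1" using assms by (intro mult_mono) auto
  then show ?thesis using z by simp
qed

definition grid :: "real \<Rightarrow> nat \<Rightarrow> nat" where "grid g n = nat \<lfloor>(real n + 1) powr g\<rfloor>"

context fixes g :: real assumes g1: "g > 1"
begin

lemma grid_bounds: "(real n + 1) powr g - 1 < real (grid g n)" "real (grid g n) \<le> (real n + 1) powr g"
proof -
  have p: "(real n + 1) powr g \<ge> 1" using g1 by (intro ge_one_powr_ge_zero) auto
  then have f: "\<lfloor>(real n + 1) powr g\<rfloor> \<ge> 1" by linarith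
  have e: "real (grid g n) = real_of_int \<lfloor>(real n + 1) powr g\<rfloor>" unfolding grid_def using f by simp
  show "(real n + 1) powr g - 1 < real (grid g n)" unfolding e by linarith
  show "real (grid g n) \<le> (real n + 1) powr g" unfolding e by linarith
qed

lemma grid_bounds_Suc: "(real n + 2) powr g - 1 < real (grid g (Suc n))" "real (grid g (Suc n)) \<le> (real n + 2) powr g"
proof -
  have e: "real (Suc n) + 1 = real n + 2" by simp
  show "(real n + 2) powr g - 1 < real (grid g (Suc n))" using grid_bounds(1)[of "Suc n"] unfolding e .
  show "real (grid g (Suc n)) \<le> (real n + 2) powr g" using grid_bounds(2)[of "Suc n"] unfolding e .
qed

lemma grid_ge1: "1 \<le> grid g n"
proof -
  have p: "(real n + 1) powr g \<ge> 1" using g1 by (intro ge_one_powr_ge_zero) auto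
  then show ?thesis unfolding grid_def by linarith
qed

lemma grid_mono: "grid g n < grid g (Suc n)"
proof -
  have "(real n + 1 + 1) powr g - (real n + 1) powr g \<ge> 1" using g1 by (intro powr_step_ge) auto
  then have "(real n + 1) powr g + 1 \<le> (real (Suc n) + 1) powr g" by simp
  then have "\<lfloor>(real n + 1) powr g\<rfloor> + 1 \<le> \<lfloor>(real (Suc n) + 1) powr g\<rfloor>" by linarith
  moreover have "\<lfloor>(real n + 1) powr g\<rfloor> \<ge> 0" by (simp)
  ultimately show ?thesis unfolding grid_def by linarith
qed

lemma grid_smono: "strict_mono (grid g)"
  using grid_mono by (simp add: strict_mono_Suc_iff)

lemma grid_half: "real (grid g n) \<ge> (real n + 1) powr g / 2"
  using grid_bounds[of n] grid_ge1[of n] by linarith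

lemma grid_summable: "summable (\<lambda>n. 1 / real (grid g n))"
proof (rule summable_comparison_test[where g="\<lambda>n. 2 * (real (Suc n)) powr (-g)"])
  have "summable (\<lambda>n. real n powr (-g))" using g1 by (simp add: summable_real_powr_iff)
  then have "summable (\<lambda>n. real (Suc n) powr (-g))" by (subst summable_Suc_iff)
  then show "summable (\<lambda>n. 2 * (real (Suc n)) powr (-g))" by (rule summable_mult)
  show "\<exists>N. \<forall>n\<ge>N. norm (1 / real (grid g n)) \<le> 2 * real (Suc n) powr - g"
  proof (intro exI allI impI)
    fix n :: nat
    have pos: "(real n + 1) powr g > 0" by simp
    have "1 / real (grid g n) \<le> 1 / ((real n + 1) powr g / 2)"
      using grid_half[of n] pos by (intro frac_le) auto
    also have "\<dots> = 2 * (real n + 1) powr (-g)" by (simp add: powr_minus field_simps)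
    finally show "norm (1 / real (grid g n)) \<le> 2 * real (Suc n) powr - g" by (simp add: add.commute)
  qed
qed

lemma grid_gap: "real (grid g (Suc n)) - real (grid g n) \<le> g * (real n + 2) powr (g - 1) + 1"
proof -
  have "(real n + 1 + 1) powr g - (real n + 1) powr g \<le> g * (real n + 1 + 1) powr (g-1)"
    using g1 by (intro powr_step_le) auto
  then show ?thesis using grid_bounds[of n] grid_bounds_Suc[of n] by (simp add: add.assoc)
qed

lemma grid_ratio: "(\<lambda>n. real (grid g (Suc n)) / real (grid g n)) \<longlonglongrightarrow> 1"
proof (rule tendsto_sandwich[where f="\<lambda>_. 1" and h="\<lambda>n. (real n + 2) powr g / ((real n + 1) powr g - 1)"])
  show "eventually (\<lambda>n. 1 \<le> real (grid g (Suc n)) / real (grid g n)) sequentially"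
  proof (intro always_eventually allI)
    fix n
    have "real (grid g n) > 0" "real (grid g n) \<le> real (grid g (Suc n))"
      using grid_ge1[of n] grid_mono[of n] by auto
    then show "1 \<le> real (grid g (Suc n)) / real (grid g n)" by (simp add: le_divide_eq_1)
  qed
  show "eventually (\<lambda>n. real (grid g (Suc n)) / real (grid g n) \<le> (real n + 2) powr g / ((real n + 1) powr g - 1)) sequentially"
  proof (rule eventually_mono[OF eventually_gt_at_top[of 0]])
    fix n :: nat assume "n > 0"
    then have "(real n + 1) powr g \<ge> (1+1) powr g" using g1 by (intro powr_mono2) auto
    moreover have "(2::real) powr 1 < 2 powr g" using g1 by (intro powr_less_mono) auto
    moreover have "(1+1::real) = 2" by simp
    ultimately have q: "(real n + 1) powr g - 1 > 0" by simp
    have "real (grid g (Suc n)) \<le> (real n + 2) powr g" using grid_bounds_Suc[of n] by simp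
    moreover have "real (grid g n) \<ge> (real n + 1) powr g - 1" using grid_bounds[of n] by simp
    ultimately show "real (grid g (Suc n)) / real (grid g n) \<le> (real n + 2) powr g / ((real n + 1) powr g - 1)"
      using q by (intro frac_le) auto
  qed
  show "(\<lambda>n. (real n + 2) powr g / ((real n + 1) powr g - 1)) \<longlonglongrightarrow> 1" using g1 by real_asymp
qed simp

lemma grid_gap_lim:
  assumes "d > 0" "g - 1 < g * d"
  shows "(\<lambda>n. (real (grid g (Suc n)) - real (grid g n)) / real (grid g (Suc n)) powr d) \<longlonglongrightarrow> 0"
proof (rule tendsto_sandwich[where f="\<lambda>_. 0" and h="\<lambda>n. (g * (real n + 2) powr (g - 1) + 1) / ((real n + 2) powr g / 2) powr d"])
  show "eventually (\<lambda>n. 0 \<le> (real (grid g (Suc n)) - real (grid g n)) / real (grid g (Suc n)) powr d) sequentially"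
    using grid_mono by (intro always_eventually allI) (simp add: less_imp_le)
  show "eventually (\<lambda>n. (real (grid g (Suc n)) - real (grid g n)) / real (grid g (Suc n)) powr d
       \<le> (g * (real n + 2) powr (g - 1) + 1) / ((real n + 2) powr g / 2) powr d) sequentially"
  proof (intro always_eventually allI)
    fix n
    have h: "real (grid g (Suc n)) \<ge> (real n + 2) powr g / 2" using grid_bounds_Suc[of n] grid_ge1[of "Suc n"] by linarith
    have p: "(real n + 2) powr g / 2 > 0" by simp
    show "(real (grid g (Suc n)) - real (grid g n)) / real (grid g (Suc n)) powr d
       \<le> (g * (real n + 2) powr (g - 1) + 1) / ((real n + 2) powr g / 2) powr d"
      using grid_gap[of n] grid_mono[of n] h p assms(1)
      by (intro frac_le powr_mono2) auto
  qed
  show "(\<lambda>n. (g * (real n + 2) powr (g - 1) + 1) / ((real n + 2) powr g / 2) powr d) \<longlonglongrightarrow> 0"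
    using g1 assms by real_asymp
qed simp

lemma grid_inf: "filterlim (\<lambda>n. real (grid g n)) at_top sequentially"
proof (rule filterlim_at_top_mono[where f="\<lambda>n. (real n + 1) powr g / 2"])
  show "filterlim (\<lambda>n. (real n + 1) powr g / 2) at_top sequentially" using g1 by real_asymp
  show "eventually (\<lambda>n. (real n + 1) powr g / 2 \<le> real (grid g n)) sequentially"
    using grid_half by simp
qed

end

lemma window_le:
  fixes g b :: real assumes g1: "g > 1" and gb: "g \<le> b"
  shows "nat \<lfloor>(real (grid g (Suc n)) powr (1/b) - 1) powr b\<rfloor> \<le> grid g n"
proof -
  define N where "N = real (grid g (Suc n))"
  define th where "th = g / b"
  have b0: "b > 0" using g1 gb by simp
  have th: "0 < th" "th \<le> 1" unfolding th_def using g1 gb by auto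
  have N1: "N \<ge> 1" unfolding N_def using grid_ge1[OF g1] by simp
  have Nle: "N \<le> (real n + 2) powr g" unfolding N_def using grid_bounds_Suc[OF g1] by simp
  have "N powr (1/b) \<le> ((real n + 2) powr g) powr (1/b)" using Nle N1 b0 by (intro powr_mono2) auto
  also have "\<dots> = (real n + 2) powr th" unfolding th_def by (simp add: powr_powr)
  also have "\<dots> = (real n + 1 + 1) powr th" by (simp add: add.assoc)
  also have "\<dots> \<le> (real n + 1) powr th + 1" using th by (intro powr_step_sub) auto
  finally have x1: "N powr (1/b) - 1 \<le> (real n + 1) powr th" by simp
  have x0: "N powr (1/b) - 1 \<ge> 0" using N1 b0 by (simp add: ge_one_powr_ge_zero)
  have "(N powr (1/b) - 1) powr b \<le> ((real n + 1) powr th) powr b" using x0 x1 b0 by (intro powr_mono2) auto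
  also have "\<dots> = (real n + 1) powr g" unfolding th_def using b0 by (simp add: powr_powr)
  finally have "\<lfloor>(N powr (1/b) - 1) powr b\<rfloor> \<le> \<lfloor>(real n + 1) powr g\<rfloor>" by (rule floor_mono)
  then show ?thesis unfolding N_def grid_def by (simp add: nat_mono)
qed

lemma find_block:
  assumes "strict_mono (f::nat \<Rightarrow> nat)" "f k \<le> L"
  shows "\<exists>n\<ge>k. f n \<le> L \<and> L < f (Suc n)"
proof -
  define A where "A = {n. f n \<le> L}"
  have fin: "finite A"
  proof -
    have "A \<subseteq> {..L}" unfolding A_def using strict_mono_imp_increasing[OF assms(1)] by (auto intro: le_trans)
    then show ?thesis by (rule finite_subset) auto
  qed
  have kA: "k \<in> A" unfolding A_def using assms by simp
  define n where "n = Max A"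
  have "n \<in> A" unfolding n_def using fin kA by (intro Max_in) auto
  moreover have "k \<le> n" unfolding n_def using fin kA by simp
  moreover have "Suc n \<notin> A" unfolding n_def using fin Max_ge[OF fin] by (metis Suc_n_not_le_n)
  ultimately show ?thesis unfolding A_def by auto
qed




locale mainloc = prob_space M for M :: "'a measure" +
  fixes E :: "nat \<Rightarrow> nat \<Rightarrow> 'a \<Rightarrow> real" and u :: "nat \<Rightarrow> real" and \<sigma> :: real
  assumes Spos: "\<forall>M\<ge>1. (\<Sum>i=1..M. (u i)\<^sup>2) > 0"
    and indepE: "indep_vars (\<lambda>_. borel) (\<lambda>(i,j). E i j) {(i,j). 1 \<le> i \<and> 1 \<le> j}"
    and distrE: "\<forall>i\<ge>1. \<forall>j\<ge>1. distr M borel (E i j) = distr M borel (E 1 1)"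
    and int1: "integrable M (E 1 1)"
    and mean: "expectation (E 1 1) = 0"
    and varE: "variance (E 1 1) = \<sigma>\<^sup>2"
    and int4E: "integrable M (\<lambda>x. (E 1 1 x) ^ 4)"
begin

lemma rvE: assumes "1 \<le> i" "1 \<le> j" shows "E i j \<in> borel_measurable M"
proof -
  have k: "(i,j) \<in> {(i,j). 1 \<le> i \<and> 1 \<le> j}" using assms by simp
  have "case_prod E (i,j) \<in> borel_measurable M"
    using bspec[OF conjunct1[OF indepE[unfolded indep_vars_def]] k] by simp
  then show ?thesis by simp
qed

lemma transfer:
  fixes h :: "real \<Rightarrow> real"
  assumes "1 \<le> i" "1 \<le> j" "h \<in> borel_measurable borel" "integrable M (\<lambda>x. h (E 1 1 x))"
  shows "integrable M (\<lambda>x. h (E i j x)) \<and> integral\<^sup>L M (\<lambda>x. h (E i j x)) = integral\<^sup>L M (\<lambda>x. h (E 1 1 x))"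
proof -
  have d: "distr M borel (E i j) = distr M borel (E 1 1)" using distrE assms(1,2) by blast
  have m: "E i j \<in> borel_measurable M" "E 1 1 \<in> borel_measurable M" using rvE assms by auto
  have "integrable (distr M borel (E 1 1)) h" using integrable_distr_eq[OF m(2) assms(3)] assms(4) by simp
  then have "integrable (distr M borel (E i j)) h" using d by simp
  then have i: "integrable M (\<lambda>x. h (E i j x))" using integrable_distr_eq[OF m(1) assms(3)] by simp
  have "integral\<^sup>L M (\<lambda>x. h (E i j x)) = integral\<^sup>L (distr M borel (E i j)) h"
    using integral_distr[OF m(1) assms(3)] by simp
  also have "\<dots> = integral\<^sup>L (distr M borel (E 1 1)) h" using d by simp
  also have "\<dots> = integral\<^sup>L M (\<lambda>x. h (E 1 1 x))" using integral_distr[OF m(2) assms(3)] by simp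
  finally show ?thesis using i by simp
qed

lemma E2: "expectation (\<lambda>x. (E 1 1 x)^2) = \<sigma>^2"
  using varE mean by simp

lemma iid: "iid4 M (case_prod E) {(i,j). 1 \<le> i \<and> 1 \<le> j} (\<sigma>^2) (expectation (\<lambda>x. (E 1 1 x) ^ 4))"
proof -
  have i2: "integrable M (\<lambda>x. (E 1 1 x)^2)"
    using integrable_pow_le4[OF rvE int4E, of 2] by simp
  have A: "integrable M (\<lambda>x. (E i j x)^4) \<and> expectation (E i j) = 0 \<and> expectation (\<lambda>x. (E i j x)^2) = \<sigma>^2
     \<and> expectation (\<lambda>x. (E i j x)^4) \<le> expectation (\<lambda>x. (E 1 1 x) ^ 4)" if "1 \<le> i" "1 \<le> j" for i j
  proof -
    have m4: "(\<lambda>x::real. x^4) \<in> borel_measurable borel" by measurable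
    have m2: "(\<lambda>x::real. x^2) \<in> borel_measurable borel" by measurable
    have m1: "(\<lambda>x::real. x) \<in> borel_measurable borel" by measurable
    note t4 = transfer[OF that m4 int4E] and t2 = transfer[OF that m2 i2]
    have t1: "integrable M (E i j) \<and> expectation (E i j) = expectation (E 1 1)"
      using transfer[OF that m1] int1 by simp
    show ?thesis using t4 t2 t1 mean E2 by (simp only:) simp
  qed
  show ?thesis
    apply (rule iid4.intro[OF prob_space_axioms])
    apply (rule iid4_axioms.intro)
    subgoal using indepE by simp
    subgoal for k using A[of "fst k" "snd k"] by (cases k) simp
    subgoal for k using A[of "fst k" "snd k"] by (cases k) simp
    subgoal for k using A[of "fst k" "snd k"] by (cases k) simp
    subgoal for k using A[of "fst k" "snd k"] by (cases k) simp
    done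
qed


definition "S a = (\<Sum>i=1..a. (u i)\<^sup>2)"
definition "W a b \<omega> = (\<Sum>j=1..b. (\<Sum>i=1..a. u i * E i j \<omega>)\<^sup>2)"
definition "H m N \<omega> = (\<Sum>j=1..N. \<Sum>i\<in>{m<..N}. (E i j \<omega>)\<^sup>2)"
definition "CC = max (expectation (\<lambda>x. (E 1 1 x) ^ 4)) (3 * (\<sigma>^2)^2)"

lemma Wm: "W a b \<in> borel_measurable M"
  unfolding W_def by (intro borel_measurable_sum borel_measurable_power borel_measurable_times borel_measurable_const rvE) auto

lemma Hm: "H m N \<in> borel_measurable M"
  unfolding H_def by (intro borel_measurable_sum borel_measurable_power rvE) auto

lemma Spos': "1 \<le> a \<Longrightarrow> S a > 0" using Spos unfolding S_def by auto

lemma probW: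
  assumes "1 \<le> a" "1 \<le> b" "e > 0"
  shows "prob {\<omega> \<in> space M. e \<le> \<bar>W a b \<omega> - \<sigma>^2 * (b * S a)\<bar>} \<le> CC * (b * (S a)^2) / e^2"
proof -
  define Cs where "Cs = (\<lambda>j::nat. {1..a} \<times> {j})"
  define w where "w = (\<lambda>(i::nat,j::nat). u i)"
  have fin: "finite {1..b}" "\<And>j. j\<in>{1..b} \<Longrightarrow> finite (Cs j) \<and> Cs j \<subseteq> {(i,j). 1 \<le> i \<and> 1 \<le> j}"
    unfolding Cs_def by auto
  have dis: "disjoint_family_on Cs {1..b}" unfolding Cs_def disjoint_family_on_def by auto
  have img: "{1..a} \<times> {j} = (\<lambda>i. (i,j)) ` {1..a}" for j :: nat by auto
  note ch = iid4.cheb[OF iid fin dis assms(3), of w]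
  have e1: "(\<Sum>k\<in>Cs j. w k * case_prod E k \<omega>) = (\<Sum>i=1..a. u i * E i j \<omega>)" for j \<omega>
    unfolding Cs_def w_def by (subst img) (simp add: sum.reindex inj_on_def)
  have e2: "(\<Sum>k\<in>Cs j. (w k)^2) = S a" for j
    unfolding Cs_def w_def S_def by (subst img) (simp add: sum.reindex inj_on_def)
  show ?thesis using ch unfolding e1 e2 W_def[symmetric] iid4.C4_def[OF iid] CC_def
    by (simp add: W_def power2_eq_square mult.commute)
qed


lemma probH:
  assumes "m < N"
  shows "prob {\<omega> \<in> space M. real ((N-m)*N) + 1 \<le> \<bar>H m N \<omega> - \<sigma>^2 * real ((N-m)*N)\<bar>}
     \<le> CC * real ((N-m)*N) / (real ((N-m)*N) + 1)^2"
proof -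
  define P where "P = {m<..N} \<times> {1..N}"
  define Cs where "Cs = (\<lambda>p::nat\<times>nat. {p})"
  have fin: "finite P" "\<And>j. j\<in>P \<Longrightarrow> finite (Cs j) \<and> Cs j \<subseteq> {(i,j). 1 \<le> i \<and> 1 \<le> j}"
    unfolding Cs_def P_def by auto
  have dis: "disjoint_family_on Cs P" unfolding Cs_def disjoint_family_on_def by auto
  have cP: "card P = (N-m)*N" unfolding P_def by (simp add: card_cartesian_product)
  have pos: "real ((N-m)*N) + 1 > 0" by (simp add: add_pos_nonneg del: of_nat_mult)
  note ch = iid4.cheb[OF iid fin dis pos, of "\<lambda>_. 1"]
  have h: "H m N \<omega> = (\<Sum>p\<in>P. (case_prod E p \<omega>)^2)" for \<omega>
    unfolding H_def P_def by (subst sum.swap) (auto simp: sum.cartesian_product split_beta intro!: sum.cong)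
  show ?thesis using ch unfolding Cs_def iid4.C4_def[OF iid] CC_def
    by (simp add: cP h)
qed

lemma aeW:
  assumes a: "\<And>n. 1 \<le> a n" and b: "\<And>n. 1 \<le> b n" and sb: "summable (\<lambda>n. 1 / real (b n))"
  shows "AE \<omega> in M. (\<lambda>n. W (a n) (b n) \<omega> / (b n * S (a n))) \<longlonglongrightarrow> \<sigma>^2"
proof -
  have CC0: "0 \<le> CC" unfolding CC_def by (simp add: le_max_iff_disj)
  have ev: "AE \<omega> in M. eventually (\<lambda>n. \<bar>W (a n) (b n) \<omega> / (b n * S (a n)) - \<sigma>^2\<bar> < 1/(real k+1)) sequentially" for k::nat
  proof -
    define A where "A n = {\<omega>\<in>space M. (b n * S (a n))/(real k+1) \<le> \<bar>W (a n) (b n) \<omega> - \<sigma>^2*(b n * S(a n))\<bar>}" for n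
    have bS: "b n * S (a n) > 0" for n using Spos'[OF a] b by (simp add: Suc_le_eq)
    have As: "A n \<in> sets M" for n
    proof -
      have "(\<lambda>\<omega>. \<bar>W (a n) (b n) \<omega> - \<sigma>^2*(b n * S(a n))\<bar>) \<in> borel_measurable M" using Wm by measurable
      then show ?thesis unfolding A_def by measurable
    qed
    have pA: "measure M (A n) \<le> CC * (real k + 1)^2 * (1 / real (b n))" for n
    proof -
      have "measure M (A n) \<le> CC * (b n * (S (a n))^2) / ((b n * S (a n))/(real k+1))^2"
        unfolding A_def using probW[OF a b, of "(b n * S (a n))/(real k+1)" n] bS[of n] by simp
      also have "\<dots> = CC * (real k + 1)^2 * (1 / real (b n))"
      proof -
        have "S (a n) > 0" using Spos'[OF a] by simp
        moreover have "real (b n) > 0" using b[of n] by simp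
        ultimately show ?thesis by (simp add: field_simps power2_eq_square)
      qed
      finally show ?thesis .
    qed
    have sA: "summable (\<lambda>n. measure M (A n))"
      by (rule summable_comparison_test[OF _ summable_mult[OF sb, of "CC * (real k + 1)^2"]])
         (use pA in auto)
    have "AE \<omega> in M. eventually (\<lambda>n. \<omega> \<in> space M - A n) sequentially"
      by (rule borel_cantelli_AE1[OF As _ sA]) (simp add: less_top[symmetric])
    then show ?thesis
    proof (rule AE_mp, intro AE_I2 impI)
      fix \<omega> assume "eventually (\<lambda>n. \<omega> \<in> space M - A n) sequentially" "\<omega> \<in> space M"
      then show "eventually (\<lambda>n. \<bar>W (a n) (b n) \<omega> / (b n * S (a n)) - \<sigma>^2\<bar> < 1/(real k+1)) sequentially"
      proof (elim eventually_mono)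
        fix n assume "\<omega> \<in> space M - A n"
        then have lt: "\<bar>W (a n) (b n) \<omega> - \<sigma>^2*(b n * S(a n))\<bar> < (b n * S (a n))/(real k+1)"
          unfolding A_def using \<open>\<omega> \<in> space M\<close> by auto
        have "\<bar>W (a n) (b n) \<omega> / (b n * S (a n)) - \<sigma>^2\<bar> = \<bar>W (a n) (b n) \<omega> - \<sigma>^2*(b n * S(a n))\<bar> / (b n * S (a n))"
        proof -
          have "W (a n) (b n) \<omega> / (b n * S (a n)) - \<sigma>^2 = (W (a n) (b n) \<omega> - \<sigma>^2*(b n * S(a n))) / (b n * S (a n))"
          proof -
            have d0: "b n * S (a n) \<noteq> 0" using bS[of n] by linarith
            show ?thesis by (simp only: diff_divide_distrib nonzero_mult_div_cancel_right[OF d0])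
          qed
          then show ?thesis using bS[of n] by (simp add: abs_divide)
        qed
        also have "\<dots> < 1/(real k+1)" using lt bS[of n] by (simp add: field_simps)
        finally show "\<bar>W (a n) (b n) \<omega> / (b n * S (a n)) - \<sigma>^2\<bar> < 1/(real k+1)" .
      qed
    qed
  qed
  then have "AE \<omega> in M. \<forall>k::nat. eventually (\<lambda>n. \<bar>W (a n) (b n) \<omega> / (b n * S (a n)) - \<sigma>^2\<bar> < 1/(real k+1)) sequentially"
    by (simp add: AE_all_countable)
  then show ?thesis
  proof (rule AE_mp, intro AE_I2 impI)
    fix \<omega> assume H: "\<forall>k::nat. eventually (\<lambda>n. \<bar>W (a n) (b n) \<omega> / (b n * S (a n)) - \<sigma>^2\<bar> < 1/(real k+1)) sequentially"
    show "(\<lambda>n. W (a n) (b n) \<omega> / (b n * S (a n))) \<longlonglongrightarrow> \<sigma>^2"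
    proof (rule tendstoI)
      fix r :: real assume "r > 0"
      then obtain k where k: "k > 0" "inverse (real k) < r" using ex_inverse_of_nat_less by blast
      have "1/(real k + 1) < r" using k by (smt (verit) frac_le inverse_eq_divide of_nat_0_less_iff)
      then show "eventually (\<lambda>n. dist (W (a n) (b n) \<omega> / (b n * S (a n))) (\<sigma>^2) < r) sequentially"
        using H[rule_format, of k] by (auto elim!: eventually_mono simp: dist_real_def)
    qed
  qed
qed


lemma aeH:
  assumes mN: "\<And>n. m n < N n" and sN: "summable (\<lambda>n. 1 / real (N n))"
  shows "AE \<omega> in M. eventually (\<lambda>n. H (m n) (N n) \<omega> < (\<sigma>^2+1) * real ((N n - m n) * N n) + 1) sequentially"
proof -
  have CC0: "0 \<le> CC" unfolding CC_def by (simp add: le_max_iff_disj)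
  define c where "c n = real ((N n - m n) * N n)" for n
  define A where "A n = {\<omega>\<in>space M. c n + 1 \<le> \<bar>H (m n) (N n) \<omega> - \<sigma>^2 * c n\<bar>}" for n
  have As: "A n \<in> sets M" for n
  proof -
    have "(\<lambda>\<omega>. \<bar>H (m n) (N n) \<omega> - \<sigma>^2 * c n\<bar>) \<in> borel_measurable M" using Hm by measurable
    then show ?thesis unfolding A_def by measurable
  qed
  have cN: "c n \<ge> real (N n)" for n
  proof -
    have "1 \<le> N n - m n" using mN[of n] by simp
    then have "1 * N n \<le> (N n - m n) * N n" by (intro mult_right_mono) auto
    then show ?thesis unfolding c_def by linarith
  qed
  have Npos: "real (N n) > 0" for n using mN[of n] by simp
  have pA: "measure M (A n) \<le> CC * (1 / real (N n))" for n
  proof -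
    have "measure M (A n) \<le> CC * c n / (c n + 1)^2"
      unfolding A_def c_def using probH[OF mN[of n]] by simp
    also have "\<dots> \<le> CC * (1 / real (N n))"
    proof -
      have c0: "c n \<ge> 0" unfolding c_def by simp
      have "c n / (c n + 1)^2 \<le> 1 / real (N n)"
      proof -
        have "c n * real (N n) \<le> c n * c n" using cN[of n] c0 by (intro mult_left_mono) auto
        also have "\<dots> \<le> (c n+1)^2" using c0 by (simp add: power2_eq_square algebra_simps)
        finally have "c n * real (N n) \<le> (c n + 1)^2" .
        then show ?thesis using Npos[of n] c0 by (simp add: divide_simps)
      qed
      then have "CC * (c n / (c n + 1)^2) \<le> CC * (1 / real (N n))" using CC0 by (rule mult_left_mono)
      then show ?thesis by simp
    qed
    finally show ?thesis .
  qed
  have sA: "summable (\<lambda>n. measure M (A n))"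
    by (rule summable_comparison_test[OF _ summable_mult[OF sN, of "CC"]])
       (use pA in auto)
  have "AE \<omega> in M. eventually (\<lambda>n. \<omega> \<in> space M - A n) sequentially"
    by (rule borel_cantelli_AE1[OF As _ sA]) (simp add: less_top[symmetric])
  then show ?thesis
  proof (rule AE_mp, intro AE_I2 impI)
    fix \<omega> assume "eventually (\<lambda>n. \<omega> \<in> space M - A n) sequentially" "\<omega> \<in> space M"
    then show "eventually (\<lambda>n. H (m n) (N n) \<omega> < (\<sigma>^2+1) * real ((N n - m n) * N n) + 1) sequentially"
    proof (elim eventually_mono)
      fix n assume "\<omega> \<in> space M - A n"
      then have "\<bar>H (m n) (N n) \<omega> - \<sigma>^2 * c n\<bar> < c n + 1" unfolding A_def using \<open>\<omega> \<in> space M\<close> by auto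
      then have "H (m n) (N n) \<omega> < (\<sigma>^2+1) * c n + 1" by (simp add: algebra_simps)
      then show "H (m n) (N n) \<omega> < (\<sigma>^2+1) * real ((N n - m n) * N n) + 1"
        unfolding c_def .
    qed
  qed
qed


lemma ineq_t:
  fixes a d t :: real assumes "t > 0"
  shows "(a + d)^2 \<le> (1+t) * a^2 + (1 + 1/t) * d^2"
proof -
  have "0 \<le> (t*a - d)^2 / t" using assms by simp
  also have "(t*a - d)^2 / t = t * a^2 - 2*a*d + d^2/t" using assms
    by (simp add: power2_eq_square field_simps)
  finally have "2*a*d \<le> t * a^2 + d^2/t" by simp
  then show ?thesis by (simp add: power2_eq_square algebra_simps)
qed

lemma split_sum: fixes m L :: nat shows "m \<le> L \<Longrightarrow> (\<Sum>i=1..L. f i) = (\<Sum>i=1..m. f i) + (\<Sum>i\<in>{m<..L}. f i::real)"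
proof -
  assume "m \<le> L"
  then have "{1..L} = {1..m} \<union> {m<..L}" by auto
  moreover have "{1..m} \<inter> {m<..L} = {}" by auto
  ultimately show ?thesis by (simp add: sum.union_disjoint)
qed

lemma block:
  assumes "m \<le> L" "L \<le> N" "t > 0"
  shows "W L L \<omega> \<le> (1+t) * W m N \<omega> + (1 + 1/t) * ((S N - S m) * H m N \<omega>)"
    and "W m m \<omega> \<le> (1+t) * W L L \<omega> + (1 + 1/t) * ((S N - S m) * H m N \<omega>)"
proof -
  define a where "a j = (\<Sum>i=1..m. u i * E i j \<omega>)" for j
  define d where "d j = (\<Sum>i\<in>{m<..L}. u i * E i j \<omega>)" for j
  have v: "(\<Sum>i=1..L. u i * E i j \<omega>) = a j + d j" for j
    unfolding a_def d_def using split_sum[OF assms(1)] by simp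
  have SN: "S N - S m = (\<Sum>i\<in>{m<..N}. (u i)^2)" unfolding S_def using split_sum[of m N] assms by simp
  have dj: "(d j)^2 \<le> (S N - S m) * (\<Sum>i\<in>{m<..N}. (E i j \<omega>)^2)" for j
  proof -
    have "(d j)^2 \<le> (\<Sum>i\<in>{m<..L}. (u i)^2) * (\<Sum>i\<in>{m<..L}. (E i j \<omega>)^2)"
      unfolding d_def by (rule Cauchy_Schwarz_ineq_sum)
    also have "\<dots> \<le> (S N - S m) * (\<Sum>i\<in>{m<..N}. (E i j \<omega>)^2)"
      unfolding SN using assms by (intro mult_mono sum_mono2 sum_nonneg) auto
    finally show ?thesis .
  qed
  have D: "(\<Sum>j=1..L. (d j)^2) \<le> (S N - S m) * H m N \<omega>"
  proof -
    have "(\<Sum>j=1..L. (d j)^2) \<le> (\<Sum>j=1..L. (S N - S m) * (\<Sum>i\<in>{m<..N}. (E i j \<omega>)^2))"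
      by (intro sum_mono dj)
    also have "\<dots> \<le> (\<Sum>j=1..N. (S N - S m) * (\<Sum>i\<in>{m<..N}. (E i j \<omega>)^2))"
      using assms SN by (intro sum_mono2 mult_nonneg_nonneg sum_nonneg zero_le_power2) (auto simp: sum_nonneg)
    also have "\<dots> = (S N - S m) * H m N \<omega>" unfolding H_def by (simp add: sum_distrib_left)
    finally show ?thesis .
  qed
  have aM: "(\<Sum>j=1..L. (a j)^2) \<le> W m N \<omega>" unfolding W_def a_def using assms by (intro sum_mono2) auto
  have "W L L \<omega> = (\<Sum>j=1..L. (a j + d j)^2)" unfolding W_def v ..
  also have "\<dots> \<le> (\<Sum>j=1..L. (1+t) * (a j)^2 + (1 + 1/t) * (d j)^2)"
    by (intro sum_mono ineq_t assms(3))
  also have "\<dots> = (1+t) * (\<Sum>j=1..L. (a j)^2) + (1 + 1/t) * (\<Sum>j=1..L. (d j)^2)"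
    by (simp add: sum.distrib sum_distrib_left)
  also have "\<dots> \<le> (1+t) * W m N \<omega> + (1 + 1/t) * ((S N - S m) * H m N \<omega>)"
    using aM D assms(3) by (intro add_mono mult_left_mono) auto
  finally show "W L L \<omega> \<le> (1+t) * W m N \<omega> + (1 + 1/t) * ((S N - S m) * H m N \<omega>)" .
  have "W m m \<omega> = (\<Sum>j=1..m. (a j)^2)" unfolding W_def a_def ..
  also have "\<dots> \<le> (\<Sum>j=1..L. (a j)^2)" using assms by (intro sum_mono2) auto
  also have "\<dots> = (\<Sum>j=1..L. ((a j + d j) + (- d j))^2)" by simp
  also have "\<dots> \<le> (\<Sum>j=1..L. (1+t) * (a j + d j)^2 + (1 + 1/t) * (- d j)^2)"
    by (intro sum_mono ineq_t assms(3))
  also have "\<dots> = (1+t) * W L L \<omega> + (1 + 1/t) * (\<Sum>j=1..L. (d j)^2)"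
    unfolding W_def v by (simp add: sum.distrib sum_distrib_left)
  also have "\<dots> \<le> (1+t) * W L L \<omega> + (1 + 1/t) * ((S N - S m) * H m N \<omega>)"
    using D assms(3) by (intro add_mono mult_left_mono) auto
  finally show "W m m \<omega> \<le> (1+t) * W L L \<omega> + (1 + 1/t) * ((S N - S m) * H m N \<omega>)" .
qed

end



context mainloc begin

lemma aux_lt: "0 \<le> (x::real) \<Longrightarrow> x < 2*(x+1)" by (simp add: algebra_simps)
lemma aux_pos: "0 \<le> (x::real) \<Longrightarrow> 0 < x + 1" by simp

lemma W_nonneg: "0 \<le> W a b \<omega>" unfolding W_def by (simp add: sum_nonneg)
lemma H_nonneg: "0 \<le> H a b \<omega>" unfolding H_def by (simp add: sum_nonneg)
lemma S_mono: "a \<le> b \<Longrightarrow> S a \<le> S b" unfolding S_def by (intro sum_mono2) auto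

lemma det:
  fixes \<omega> and m N :: "nat \<Rightarrow> nat" and c b' :: real
  assumes smono: "strict_mono m" and Nm: "\<And>n. N n = m (Suc n)" and m1: "\<And>n. 1 \<le> m n"
    and ratio: "(\<lambda>n. real (N n) / real (m n)) \<longlonglongrightarrow> 1"
    and gap: "(\<lambda>n. (real (N n) - real (m n)) / real (N n) powr b') \<longlonglongrightarrow> 0"
    and rho: "(\<lambda>n. c / real (N n) powr b') \<longlonglongrightarrow> 0"
    and win: "\<And>n. S (N n) - S (m n) \<le> c * S (N n) / real (N n) powr b'"
    and c0: "c \<ge> 0"
    and hA: "(\<lambda>n. W (m n) (m n) \<omega> / (m n * S (m n))) \<longlonglongrightarrow> \<sigma>^2"
    and hB: "(\<lambda>n. W (m n) (N n) \<omega> / (N n * S (m n))) \<longlonglongrightarrow> \<sigma>^2"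
    and hC: "eventually (\<lambda>n. H (m n) (N n) \<omega> < (\<sigma>^2+1) * real ((N n - m n) * N n) + 1) sequentially"
  shows "(\<lambda>L. W L L \<omega> / (real L * S L)) \<longlonglongrightarrow> \<sigma>^2"
proof -
  have mN: "m n < N n" for n using smono Nm by (simp add: strict_mono_def)
  have Smpos: "S (m n) > 0" for n using Spos'[OF m1] .
  have SNpos: "S (N n) > 0" for n using Spos' m1[of n] mN[of n] by simp
  have SmN: "S (m n) \<le> S (N n)" for n using S_mono mN[of n] by simp
  have Npos: "real (N n) > 0" for n using m1[of n] mN[of n] by simp
  have mpos: "real (m n) > 0" for n using m1[of n] by simp
  define sr where "sr n = S (m n) / S (N n)" for n
  define rr where "rr n = c / real (N n) powr b'" for n
  define r1 where "r1 n = real (N n) / real (m n)" for n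
  define gp where "gp n = (real (N n) - real (m n)) / real (N n) powr b'" for n
  have rr0: "rr n \<ge> 0" for n unfolding rr_def using c0 by simp
  have sr_lim: "sr \<longlonglongrightarrow> 1"
  proof (rule tendsto_sandwich[where f="\<lambda>n. 1 - rr n" and h="\<lambda>_. 1"])
    show "eventually (\<lambda>n. 1 - rr n \<le> sr n) sequentially"
    proof (intro always_eventually allI)
      fix n
      have "S (N n) - S (m n) \<le> rr n * S (N n)" using win[of n] unfolding rr_def by simp
      then have "(1 - rr n) * S (N n) \<le> S (m n)" by (simp add: algebra_simps)
      then show "1 - rr n \<le> sr n" unfolding sr_def using SNpos[of n] by (simp add: le_divide_eq)
    qed
    show "eventually (\<lambda>n. sr n \<le> 1) sequentially"
      using SmN SNpos unfolding sr_def by (intro always_eventually allI) (simp add: divide_le_eq_1)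
    show "(\<lambda>n. 1 - rr n) \<longlonglongrightarrow> 1" using tendsto_diff[OF tendsto_const rho] unfolding rr_def by simp
  qed simp
  have srpos: "sr n > 0" for n unfolding sr_def using Smpos SNpos by simp
  define D where "D n = (S (N n) - S (m n)) * H (m n) (N n) \<omega> / (real (m n) * S (m n))" for n
  define Bd where "Bd n = (c * gp n * (\<sigma>^2+1) * r1 n + rr n) / sr n" for n
  have Bd_lim: "Bd \<longlonglongrightarrow> 0"
  proof -
    have "(\<lambda>n. (c * gp n * (\<sigma>^2+1) * r1 n + rr n) / sr n) \<longlonglongrightarrow> (c * 0 * (\<sigma>^2+1) * 1 + 0) / 1"
      using gap ratio rho sr_lim unfolding gp_def r1_def rr_def
      by (intro tendsto_intros) auto
    then show ?thesis unfolding Bd_def by simp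
  qed
  have D0: "D n \<ge> 0" for n unfolding D_def using SmN[of n] H_nonneg Smpos[of n] mpos[of n] by simp
  have DBd: "eventually (\<lambda>n. D n \<le> Bd n) sequentially"
    using hC
  proof (rule eventually_mono)
    fix n assume Hn: "H (m n) (N n) \<omega> < (\<sigma>^2+1) * real ((N n - m n) * N n) + 1"
    define K where "K = (\<sigma>^2+1) * real ((N n - m n) * N n) + 1"
    have K0: "K \<ge> 0" unfolding K_def by (simp add: add_nonneg_nonneg)
    have "(S (N n) - S (m n)) * H (m n) (N n) \<omega> \<le> (S (N n) - S (m n)) * K"
      using Hn SmN[of n] unfolding K_def by (intro mult_left_mono) auto
    also have "\<dots> \<le> (rr n * S (N n)) * K"
      using win[of n] K0 unfolding rr_def by (intro mult_right_mono) auto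
    finally have a: "(S (N n) - S (m n)) * H (m n) (N n) \<omega> \<le> rr n * S (N n) * K" .
    have Ke: "K = (\<sigma>^2+1) * (real (N n) - real (m n)) * real (N n) + 1"
      unfolding K_def using mN[of n] by (simp add: of_nat_diff less_imp_le)
    have "D n \<le> rr n * S (N n) * K / (real (m n) * S (m n))"
      unfolding D_def using a Smpos[of n] mpos[of n] by (intro divide_right_mono) auto
    also have "\<dots> = (c * gp n * (\<sigma>^2+1) * r1 n + rr n / real (m n)) / sr n"
      unfolding Ke rr_def gp_def r1_def sr_def using Smpos[of n] SNpos[of n] mpos[of n] Npos[of n]
      by (simp add: field_simps)
    also have "\<dots> \<le> Bd n"
    proof -
      have "rr n * 1 \<le> rr n * real (m n)" using rr0[of n] m1[of n] by (intro mult_left_mono) auto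
      then have "rr n / real (m n) \<le> rr n" using mpos[of n] by (simp add: divide_le_eq)
      then show ?thesis unfolding Bd_def using srpos[of n] by (intro divide_right_mono) auto
    qed
    finally show "D n \<le> Bd n" .
  qed
  have D_lim: "D \<longlonglongrightarrow> 0"
    by (rule tendsto_sandwich[OF _ DBd tendsto_const Bd_lim]) (simp add: D0)
  show ?thesis
  proof (rule LIMSEQ_I)
    fix e :: real assume e: "e > 0"
    define t where "t = e / (2 * (\<sigma>^2 + 1))"
    have s0: "\<sigma>^2 \<ge> 0" by simp
    have "\<sigma>^2 + 1 > 0" using aux_pos[OF s0] .
    then have p2: "2 * (\<sigma>^2 + 1) > 0" by simp
    then have t0: "t > 0" unfolding t_def using e by (intro divide_pos_pos)
    have ts: "t * \<sigma>^2 < e"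
    proof -
      have "t * \<sigma>^2 = e * (\<sigma>^2 / (2 * (\<sigma>^2 + 1)))" unfolding t_def by simp
      also have "\<sigma>^2 / (2 * (\<sigma>^2 + 1)) < 1" using p2 aux_lt[OF s0] by (subst divide_less_eq_1_pos) auto
      then have "e * (\<sigma>^2 / (2 * (\<sigma>^2 + 1))) < e * 1" using e by (intro mult_strict_left_mono) auto
      finally show ?thesis by simp
    qed
    define U where "U n = (1+t) * ((W (m n) (N n) \<omega> / (N n * S (m n))) * r1 n) + (1 + 1/t) * D n" for n
    define Lw where "Lw n = (W (m n) (m n) \<omega> / (m n * S (m n)) - (1 + 1/t) * D n) * (sr n / r1 n) / (1+t)" for n
    have U_lim: "U \<longlonglongrightarrow> (1+t) * (\<sigma>^2 * 1) + (1 + 1/t) * 0"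
      unfolding U_def r1_def using hB ratio D_lim by (intro tendsto_intros)
    have Lw_lim: "Lw \<longlonglongrightarrow> (\<sigma>^2 - (1 + 1/t) * 0) * (1 / 1) / (1+t)"
      unfolding Lw_def r1_def using hA ratio D_lim sr_lim t0 by (intro tendsto_intros) auto
    have "(1+t) * (\<sigma>^2 * 1) + (1 + 1/t) * 0 < \<sigma>^2 + e" using ts by (simp add: algebra_simps)
    then have evU: "eventually (\<lambda>n. U n < \<sigma>^2 + e) sequentially" by (rule order_tendstoD(2)[OF U_lim])
    have "\<sigma>^2 - e < (\<sigma>^2 - (1 + 1/t) * 0) * (1 / 1) / (1+t)"
    proof -
      have "\<sigma>^2 - \<sigma>^2 / (1+t) = \<sigma>^2 * t / (1+t)" using t0 by (simp add: field_simps)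
      also have "\<dots> \<le> \<sigma>^2 * t"
      proof -
        have "(\<sigma>^2 * t) * 1 \<le> (\<sigma>^2 * t) * (1 + t)" using t0 s0 by (intro mult_left_mono) auto
        then show ?thesis using t0 by (simp add: divide_le_eq)
      qed
      finally show ?thesis using ts by (simp add: mult.commute)
    qed
    then have evL: "eventually (\<lambda>n. \<sigma>^2 - e < Lw n) sequentially" by (rule order_tendstoD(1)[OF Lw_lim])
    obtain n0 where n0: "\<And>n. n \<ge> n0 \<Longrightarrow> U n < \<sigma>^2 + e \<and> \<sigma>^2 - e < Lw n"
      using eventually_conj[OF evU evL] unfolding eventually_sequentially by blast
    show "\<exists>no. \<forall>L\<ge>no. norm (W L L \<omega> / (real L * S L) - \<sigma>^2) < e"
    proof (intro exI allI impI)
      fix L assume L: "L \<ge> m n0"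
      obtain n where n: "n \<ge> n0" "m n \<le> L" "L < N n" using find_block[OF smono L] Nm by auto
      have SL: "S (m n) \<le> S L" "S L \<le> S (N n)" using S_mono n by auto
      have LS: "real (m n) * S (m n) \<le> real L * S L" using SL n Smpos[of n] by (intro mult_mono) auto
      have LS2: "real L * S L \<le> real (N n) * S (N n)" using SL n Smpos[of n] by (intro mult_mono) auto
      have mS: "real (m n) * S (m n) > 0" using Smpos[of n] mpos[of n] by simp
      define Q where "Q = (S (N n) - S (m n)) * H (m n) (N n) \<omega>"
      have Q0: "Q \<ge> 0" unfolding Q_def using SmN[of n] H_nonneg by simp
      have bl1: "W L L \<omega> \<le> (1+t) * W (m n) (N n) \<omega> + (1 + 1/t) * Q"
        unfolding Q_def using block(1)[of "m n" L "N n" t \<omega>] n t0 by simp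
      have bl2: "W (m n) (m n) \<omega> \<le> (1+t) * W L L \<omega> + (1 + 1/t) * Q"
        unfolding Q_def using block(2)[of "m n" L "N n" t \<omega>] n t0 by simp
      have up: "W L L \<omega> / (real L * S L) \<le> U n"
      proof -
        have R0: "0 \<le> (1+t) * W (m n) (N n) \<omega> + (1 + 1/t) * Q" using t0 Q0 W_nonneg
          by (intro add_nonneg_nonneg mult_nonneg_nonneg) auto
        have "W L L \<omega> / (real L * S L) \<le> ((1+t) * W (m n) (N n) \<omega> + (1 + 1/t) * Q) / (real L * S L)"
          using bl1 mS LS by (intro divide_right_mono) auto
        also have "\<dots> \<le> ((1+t) * W (m n) (N n) \<omega> + (1 + 1/t) * Q) / (real (m n) * S (m n))"
          using R0 mS LS by (intro divide_left_mono) auto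
        also have "\<dots> = U n"
          unfolding U_def D_def Q_def r1_def using Smpos[of n] mpos[of n] Npos[of n]
          by (simp add: field_simps)
        finally show ?thesis .
      qed
      have lo: "Lw n \<le> W L L \<omega> / (real L * S L)"
      proof -
        define X where "X = W (m n) (m n) \<omega> - (1 + 1/t) * Q"
        have e1: "W (m n) (m n) \<omega> / (m n * S (m n)) - (1 + 1/t) * D n = X / (real (m n) * S (m n))"
          unfolding D_def Q_def X_def by (simp add: diff_divide_distrib)
        have e2: "sr n / r1 n = (real (m n) * S (m n)) / (real (N n) * S (N n))"
          unfolding sr_def r1_def using Smpos[of n] SNpos[of n] mpos[of n] Npos[of n] by (simp add: field_simps)
        have LwX: "Lw n = X / ((1+t) * (real (N n) * S (N n)))"
          unfolding Lw_def e1 e2 using Smpos[of n] mpos[of n] by simp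
        have q0: "0 \<le> W L L \<omega> / (real L * S L)" using W_nonneg mS LS by simp
        show ?thesis
        proof (cases "X \<le> 0")
          case True
          then have "Lw n \<le> 0" unfolding LwX using t0 Npos[of n] SNpos[of n]
            by (simp add: divide_nonpos_pos)
          then show ?thesis using q0 by linarith
        next
          case False
          have XW: "X / (1+t) \<le> W L L \<omega>" using bl2 t0 unfolding X_def by (simp add: divide_le_eq algebra_simps)
          have "Lw n = (X / (1+t)) / (real (N n) * S (N n))" unfolding LwX by simp
          also have "\<dots> \<le> (X / (1+t)) / (real L * S L)"
            using False t0 LS2 mS LS by (intro divide_left_mono) auto
          also have "\<dots> \<le> W L L \<omega> / (real L * S L)"
            using XW mS LS by (intro divide_right_mono) auto
          finally show ?thesis .
        qed
      qed
      have "n \<ge> n0" using n by simp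
      then have "U n < \<sigma>^2 + e" "\<sigma>^2 - e < Lw n" using n0 by auto
      then show "norm (W L L \<omega> / (real L * S L) - \<sigma>^2) < e" using up lo by (simp add: abs_less_iff)
    qed
  qed
qed

lemma final:
  assumes b1: "b > 1" and b'0: "b' > 0" and c0: "c > 0"
    and win: "\<forall>L::nat\<ge>1. (\<Sum>i\<in>{max 1 (nat \<lfloor>(real L powr (1/b) - 1) powr b\<rfloor>)..L}. (u i)\<^sup>2)
             / (\<Sum>i=1..L. (u i)\<^sup>2) \<le> c / real L powr b'"
  shows "AE \<omega> in M. (\<lambda>L. W L L \<omega> / (real L * S L)) \<longlonglongrightarrow> \<sigma>^2"
proof -
  define g where "g = min b (1 + b'/2)"
  have g1: "g > 1" unfolding g_def using b1 b'0 by simp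
  have gb: "g \<le> b" unfolding g_def by simp
  have gd: "g - 1 < g * b'"
  proof -
    have "g \<le> 1 + b'/2" unfolding g_def by (rule min.cobounded2)
    then have "g - 1 \<le> b'/2" by simp
    also have "\<dots> < b'" using b'0 by simp
    also have "b' = 1 * b'" by simp
    also have "\<dots> \<le> g * b'" using g1 b'0 by (intro mult_right_mono) auto
    finally show ?thesis .
  qed
  define m where "m = grid g"
  define N where "N n = m (Suc n)" for n
  have smono: "strict_mono m" unfolding m_def using grid_smono[OF g1] .
  have m1: "1 \<le> m n" for n unfolding m_def using grid_ge1[OF g1] .
  have N1: "1 \<le> N n" for n unfolding N_def using m1 .
  have mN: "m n < N n" for n unfolding N_def m_def using grid_mono[OF g1] .
  have sN: "summable (\<lambda>n. 1 / real (N n))"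
    unfolding N_def using grid_summable[OF g1] unfolding m_def by (subst summable_Suc_iff)
  have sm: "summable (\<lambda>n. 1 / real (m n))" unfolding m_def using grid_summable[OF g1] .
  have aeA: "AE \<omega> in M. (\<lambda>n. W (m n) (m n) \<omega> / (m n * S (m n))) \<longlonglongrightarrow> \<sigma>^2"
    by (rule aeW[OF m1 m1 sm])
  have aeB: "AE \<omega> in M. (\<lambda>n. W (m n) (N n) \<omega> / (N n * S (m n))) \<longlonglongrightarrow> \<sigma>^2"
    by (rule aeW[OF m1 N1 sN])
  have aeC: "AE \<omega> in M. eventually (\<lambda>n. H (m n) (N n) \<omega> < (\<sigma>^2+1) * real ((N n - m n) * N n) + 1) sequentially"
    by (rule aeH[OF mN sN])
  have ratio: "(\<lambda>n. real (N n) / real (m n)) \<longlonglongrightarrow> 1"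
    unfolding N_def m_def using grid_ratio[OF g1] .
  have gap: "(\<lambda>n. (real (N n) - real (m n)) / real (N n) powr b') \<longlonglongrightarrow> 0"
    unfolding N_def m_def using grid_gap_lim[OF g1 b'0 gd] .
  have Ninf: "filterlim (\<lambda>n. real (N n)) at_top sequentially"
    unfolding N_def m_def using filterlim_compose[OF grid_inf[OF g1] filterlim_Suc] by (simp add: comp_def)
  have rho: "(\<lambda>n. c / real (N n) powr b') \<longlonglongrightarrow> 0"
  proof -
    have "filterlim (\<lambda>x::real. c / x powr b') (nhds 0) at_top" using b'0 by real_asymp
    from filterlim_compose[OF this Ninf] show ?thesis by simp
  qed
  have winN: "S (N n) - S (m n) \<le> c * S (N n) / real (N n) powr b'" for n
  proof -
    define B where "B = nat \<lfloor>(real (N n) powr (1/b) - 1) powr b\<rfloor>"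
    have Bm: "B \<le> m n" unfolding B_def N_def m_def using window_le[OF g1 gb] .
    have w: "(\<Sum>i\<in>{max 1 B..N n}. (u i)\<^sup>2) / S (N n) \<le> c / real (N n) powr b'"
      using win N1[of n] unfolding B_def S_def by auto
    have "S (N n) - S (m n) = (\<Sum>i\<in>{m n<..N n}. (u i)^2)"
      unfolding S_def using split_sum[of "m n" "N n" "\<lambda>i. (u i)^2"] mN[of n] by simp
    also have "\<dots> \<le> (\<Sum>i\<in>{max 1 B..N n}. (u i)\<^sup>2)" using Bm by (intro sum_mono2) auto
    also have "\<dots> \<le> c / real (N n) powr b' * S (N n)"
      using w Spos'[OF N1[of n]] by (simp add: pos_divide_le_eq)
    finally show ?thesis by simp
  qed
  show ?thesis using aeA aeB aeC
  proof eventually_elim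
    case (elim \<omega>)
    show ?case
      by (rule det[OF smono N_def m1 ratio gap rho winN less_imp_le[OF c0] elim(1) elim(2) elim(3)])
  qed
qed

end

theorem theorem5:
  fixes P :: "'a measure" and E :: "nat \<Rightarrow> nat \<Rightarrow> 'a \<Rightarrow> real"
    and u :: "nat \<Rightarrow> real" and \<sigma> :: real
  assumes "prob_space P"
    and "\<forall>M\<ge>1. (\<Sum>i=1..M. (u i)\<^sup>2) > 0"
    and "\<exists>\<beta>>1. \<exists>\<beta>'>0. \<exists>c>0. \<forall>M::nat\<ge>1.
           (\<Sum>i\<in>{max 1 (nat \<lfloor>(real M powr (1/\<beta>) - 1) powr \<beta>\<rfloor>)..M}. (u i)\<^sup>2)
             / (\<Sum>i=1..M. (u i)\<^sup>2) \<le> c / real M powr \<beta>'"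
    and "prob_space.indep_vars P (\<lambda>_. borel) (\<lambda>(i,j). E i j) {(i,j). 1 \<le> i \<and> 1 \<le> j}"
    and "\<forall>i\<ge>1. \<forall>j\<ge>1. distr P borel (E i j) = distr P borel (E 1 1)"
    and "integrable P (E 1 1)"
    and "prob_space.expectation P (E 1 1) = 0"
    and "prob_space.variance P (E 1 1) = \<sigma>\<^sup>2"
    and "integrable P (\<lambda>x. (E 1 1 x) ^ 4)"
  shows "AE x in P. (\<lambda>M. \<Sum>j=1..M. (\<Sum>i=1..M.
            (u i / sqrt (\<Sum>k=1..M. (u k)\<^sup>2)) * (E i j x / sqrt (real M)))\<^sup>2)
          \<longlonglongrightarrow> \<sigma>\<^sup>2"
proof -
  have ml: "mainloc P E u \<sigma>"
    unfolding mainloc_def mainloc_axioms_def using assms(1,2,4,5,6,7,8,9) by blast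
  interpret mainloc P E u \<sigma> by (rule ml)
  obtain b b' c where b: "b > 1" "b' > 0" "c > 0" and win: "\<forall>M::nat\<ge>1.
           (\<Sum>i\<in>{max 1 (nat \<lfloor>(real M powr (1/b) - 1) powr b\<rfloor>)..M}. (u i)\<^sup>2)
             / (\<Sum>i=1..M. (u i)\<^sup>2) \<le> c / real M powr b'"
    using assms(3) by blast
  have ae: "AE x in P. (\<lambda>L. W L L x / (real L * S L)) \<longlonglongrightarrow> \<sigma>^2"
    by (rule final[OF b win])
  have eq: "(\<Sum>j=1..L. (\<Sum>i=1..L. (u i / sqrt (\<Sum>k=1..L. (u k)\<^sup>2)) * (E i j x / sqrt (real L)))\<^sup>2)
      = W L L x / (real L * S L)" for L x
  proof -
    have a0: "S L \<ge> 0" unfolding S_def by (simp add: sum_nonneg)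
    have inner: "(\<Sum>i=1..L. (u i / sqrt (S L)) * (E i j x / sqrt (real L)))
        = (\<Sum>i=1..L. u i * E i j x) / (sqrt (S L) * sqrt (real L))" for j
      by (simp add: sum_divide_distrib)
    have sq: "((\<Sum>i=1..L. u i * E i j x) / (sqrt (S L) * sqrt (real L)))\<^sup>2
        = (\<Sum>i=1..L. u i * E i j x)\<^sup>2 / (real L * S L)" for j
      using a0 by (simp add: power_divide power_mult_distrib mult.commute)
    show ?thesis unfolding S_def[symmetric] inner sq W_def by (simp add: sum_divide_distrib)
  qed
  show ?thesis unfolding eq by (rule ae)
qed

end
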